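(* A replicated system $\mathcal P$ satisfies a stable termination property $\Pi$ if and only if $\mathcal P$ has a stage graph for $\Pi$.
   Context: A replicated system of arity $n$ is $\mathcal P=(Q,T)$ with $Q$ finite and $T\subseteq\bigcup_{k=0}^n Q^{(k)}\times Q^{(k)}$ ($Q^{(k)}$: multisets over $Q$ of size $k$) containing all silent transitions $(\vec x,\vec x)$. For $t=(\vec x,\vec y)$: $\mathrm{pre}(t)=\vec x$, $\Delta(t)=\vec y-\vec x$. Configurations are $C\in\mathbb N^Q$; $t$ is enabled at $C$ if $C\ge\mathrm{pre}(t)$ and then $C\xrightarrow{t}C+\Delta(t)$; $\to$ is the union over $t$, $\xrightarrow{*}$ its reflexive-transitive closure. A run is an infinite sequence $C_0t_1C_1\cdots$ of steps; it is fair if for every possible step $C\xrightarrow{t}C'$, if $C$ occurs infinitely often then the segment $C\,t\,C'$ occurs infinitely often. Presburger formulas over $Q$ define sets $[\![\phi]\!]\subseteq\mathbb N^Q$. A stable termination property is $\Pi=(\phi_{pre},\{\phi^1_{post},\dots,\phi^k_{post}\})$ with all components Presburger formulas over $Q$; $\mathcal P$ satisfies $\Pi$ if every fair run starting at a configuration of $[\![\phi_{pre}]\!]$ satisfies $\Diamond\bigvee_{i=1}^k\Box\phi^i_{post}$ (i.e.\ from some point on all configurations satisfy $\phi^i_{post}$ for some fixed $i$). A set $\mathcal C$ is inductive if $C\in\mathcal C$, $C\to C'$ imply $C'\in\mathcal C$. A certificate for $\mathcal C\leadsto\mathcal C'$ is $f:\mathcal C\to\mathbb N$ such that every $C\in\mathcal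 C\setminus\mathcal C'$ has an execution $C\xrightarrow{*}D$, $D\in\mathcal C$, $f(C)>f(D)$. A set $\mathcal C$ satisfies $\phi^i_{post}$ if every configuration of $\mathcal C$ satisfies it (for inductive $\mathcal C$ this is the same as satisfying $\Box\phi^i_{post}$). A stage graph of $\mathcal P$ for $\Pi$ is a finite directed acyclic graph whose nodes (stages) are sets of configurations such that: (1) every stage is inductive; (2) every configuration of $[\![\phi_{pre}]\!]$ belongs to some stage; (3) for every non-terminal stage $\mathcal C$ with successors $\mathcal C_1,\dots,\mathcal C_n$ there is a certificate for $\mathcal C\leadsto(\mathcal C_1\cup\dots\cup\mathcal C_n)$; (4) every terminal stage satisfies $\phi^i_{post}$ for some $i$. *)

theory Defs
  imports Main "HOL-Library.Multiset"
begin

text \<open>Linear terms: free variables are states q (counting the number of agents in q),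
  bound variables are de Bruijn indices.\<close>
datatype 'q pterm = PVar 'q | PBVar nat | PConst nat | PAdd "'q pterm" "'q pterm"

datatype 'q pform =
    PLe "'q pterm" "'q pterm"
  | PEq "'q pterm" "'q pterm"
  | PNot "'q pform"
  | PAnd "'q pform" "'q pform"
  | POr "'q pform" "'q pform"
  | PEx "'q pform"
  | PAll "'q pform"

fun pterm_eval :: "'q multiset \<Rightarrow> (nat \<Rightarrow> nat) \<Rightarrow> 'q pterm \<Rightarrow> nat" where
  "pterm_eval C e (PVar q) = count C q"
| "pterm_eval C e (PBVar i) = e i"
| "pterm_eval C e (PConst c) = c"
| "pterm_eval C e (PAdd s t) = pterm_eval C e s + pterm_eval C e t"

definition shift_env :: "nat \<Rightarrow> (nat \<Rightarrow> nat) \<Rightarrow> nat \<Rightarrow> nat" where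
  "shift_env n e = (\<lambda>i. if i = 0 then n else e (i - 1))"

fun pform_holds :: "'q multiset \<Rightarrow> (nat \<Rightarrow> nat) \<Rightarrow> 'q pform \<Rightarrow> bool" where
  "pform_holds C e (PLe s t) = (pterm_eval C e s \<le> pterm_eval C e t)"
| "pform_holds C e (PEq s t) = (pterm_eval C e s = pterm_eval C e t)"
| "pform_holds C e (PNot f) = (\<not> pform_holds C e f)"
| "pform_holds C e (PAnd f g) = (pform_holds C e f \<and> pform_holds C e g)"
| "pform_holds C e (POr f g) = (pform_holds C e f \<or> pform_holds C e g)"
| "pform_holds C e (PEx f) = (\<exists>n. pform_holds C (shift_env n e) f)"
| "pform_holds C e (PAll f) = (\<forall>n. pform_holds C (shift_env n e) f)"

text \<open>The set of configurations defined by a formula (unbound de Bruijn indices read as 0).\<close>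
definition denot :: "'q pform \<Rightarrow> 'q multiset set" where
  "denot f = {C. pform_holds C (\<lambda>_. 0) f}"

text \<open>States: the finite type 'q (Q = UNIV). Configurations: multisets over 'q.
  A transition is a pair (pre, post) of multisets.\<close>
type_synonym 'q transition = "'q multiset \<times> 'q multiset"

definition replicated_system :: "nat \<Rightarrow> ('q::finite) transition set \<Rightarrow> bool" where
  "replicated_system n T \<longleftrightarrow>
     (\<forall>(x, y) \<in> T. size x = size y \<and> size x \<le> n) \<and>
     (\<forall>x. size x \<le> n \<longrightarrow> (x, x) \<in> T)"

definition enabled :: "'q transition \<Rightarrow> 'q multiset \<Rightarrow> bool" where
  "enabled t C \<longleftrightarrow> fst t \<subseteq># C"

definition step_by :: "'q transition set \<Rightarrow> 'q multiset \<Rightarrow> 'q transition \<Rightarrow> 'q multiset \<Rightarrow> bool" where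
  "step_by T C t C' \<longleftrightarrow> t \<in> T \<and> enabled t C \<and> C' = C - fst t + snd t"

definition step :: "'q transition set \<Rightarrow> 'q multiset \<Rightarrow> 'q multiset \<Rightarrow> bool" where
  "step T C C' \<longleftrightarrow> (\<exists>t. step_by T C t C')"

abbreviation reach :: "'q transition set \<Rightarrow> 'q multiset \<Rightarrow> 'q multiset \<Rightarrow> bool" where
  "reach T \<equiv> (step T)\<^sup>*\<^sup>*"

text \<open>A run C_0 t_1 C_1 t_2 ...: cfg i is C_i, tr i is t_{i+1}.\<close>
definition is_run :: "'q transition set \<Rightarrow> (nat \<Rightarrow> 'q multiset) \<Rightarrow> (nat \<Rightarrow> 'q transition) \<Rightarrow> bool" where
  "is_run T cfg tr \<longleftrightarrow> (\<forall>i. step_by T (cfg i) (tr i) (cfg (Suc i)))"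

definition fair_run :: "'q transition set \<Rightarrow> (nat \<Rightarrow> 'q multiset) \<Rightarrow> (nat \<Rightarrow> 'q transition) \<Rightarrow> bool" where
  "fair_run T cfg tr \<longleftrightarrow> is_run T cfg tr \<and>
     (\<forall>C t C'. step_by T C t C' \<longrightarrow> (\<exists>\<^sub>\<infinity>i. cfg i = C) \<longrightarrow>
        (\<exists>\<^sub>\<infinity>i. cfg i = C \<and> tr i = t \<and> cfg (Suc i) = C'))"

definition satisfies_stp :: "'q transition set \<Rightarrow> 'q pform \<Rightarrow> 'q pform list \<Rightarrow> bool" where
  "satisfies_stp T pre posts \<longleftrightarrow>
     (\<forall>cfg tr. fair_run T cfg tr \<longrightarrow> cfg 0 \<in> denot pre \<longrightarrow>
        (\<exists>phi \<in> set posts. \<exists>N. \<forall>m\<ge>N. cfg m \<in> denot phi))"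

definition inductive_set_cfg :: "'q transition set \<Rightarrow> 'q multiset set \<Rightarrow> bool" where
  "inductive_set_cfg T S \<longleftrightarrow> (\<forall>C C'. C \<in> S \<longrightarrow> step T C C' \<longrightarrow> C' \<in> S)"

definition certificate :: "'q transition set \<Rightarrow> ('q multiset \<Rightarrow> nat) \<Rightarrow> 'q multiset set \<Rightarrow> 'q multiset set \<Rightarrow> bool" where
  "certificate T f S S' \<longleftrightarrow>
     (\<forall>C \<in> S - S'. \<exists>D. reach T C D \<and> D \<in> S \<and> f C > f D)"

definition stage_graph :: "'q transition set \<Rightarrow> 'q pform \<Rightarrow> 'q pform list \<Rightarrow>
    'q multiset set set \<Rightarrow> ('q multiset set \<times> 'q multiset set) set \<Rightarrow> bool" where
  "stage_graph T pre posts Stages E \<longleftrightarrow>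
     finite Stages \<and> E \<subseteq> Stages \<times> Stages \<and> acyclic E \<and>
     (\<forall>S \<in> Stages. inductive_set_cfg T S) \<and>
     (\<forall>C \<in> denot pre. \<exists>S \<in> Stages. C \<in> S) \<and>
     (\<forall>S \<in> Stages. E `` {S} \<noteq> {} \<longrightarrow> (\<exists>f. certificate T f S (\<Union>(E `` {S})))) \<and>
     (\<forall>S \<in> Stages. E `` {S} = {} \<longrightarrow> (\<exists>phi \<in> set posts. S \<subseteq> denot phi))"

definition has_stage_graph :: "'q transition set \<Rightarrow> 'q pform \<Rightarrow> 'q pform list \<Rightarrow> bool" where
  "has_stage_graph T pre posts \<longleftrightarrow> (\<exists>Stages E. stage_graph T pre posts Stages E)"

end

theory Submission
  imports Defs "HOL-Library.Infinite_Set"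
begin

lemma step_size:
  assumes "replicated_system n T" "step T C C'"
  shows "size C' = size C"
proof -
  obtain t where t: "t \<in> T" "fst t \<subseteq># C" "C' = C - fst t + snd t"
    using assms(2) unfolding step_def step_by_def enabled_def by blast
  have "size (fst t) = size (snd t)" using assms(1) t(1) unfolding replicated_system_def
    by (cases t) auto
  moreover have "size (C - fst t) = size C - size (fst t)" by (rule size_Diff_submset[OF t(2)])
  moreover have "size (fst t) \<le> size C" using t(2) by (rule size_mset_mono)
  ultimately show ?thesis by (simp only: t(3) size_union)
qed

lemma reach_size:
  assumes "replicated_system n T" "reach T C D"
  shows "size D = size C"
  using assms(2) by induction (auto dest: step_size[OF assms(1)])

lemma finite_reach:
  assumes "replicated_system n T"
  shows "finite {D. reach T (C::('q::finite) multiset) D}"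
proof -
  have "{D. reach T C D} \<subseteq> multisets_of_size UNIV (size C)"
    using reach_size[OF assms] unfolding multisets_of_size_def by auto
  moreover have "finite (multisets_of_size (UNIV::'q set) (size C))" by auto
  ultimately show ?thesis by (rule finite_subset)
qed

lemma finite_T:
  assumes "replicated_system n (T::('q::finite) transition set)"
  shows "finite T"
proof -
  let ?M = "\<Union>k\<in>{..n}. multisets_of_size (UNIV::'q set) k"
  have "T \<subseteq> ?M \<times> ?M" using assms unfolding replicated_system_def multisets_of_size_def
    by fastforce
  moreover have "finite (?M \<times> ?M)" by (intro finite_cartesian_product finite_UN_I) auto
  ultimately show ?thesis by (rule finite_subset)
qed

lemma silent_step:
  assumes "replicated_system n T"
  shows "step_by T X ({#},{#}) X"
  using assms unfolding replicated_system_def step_by_def enabled_def by auto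

section \<open>Soundness of stage graphs\<close>

lemma run_reach:
  assumes "is_run T cfg tr" "i \<le> j"
  shows "reach T (cfg i) (cfg j)"
  using assms(2)
proof (induction j)
  case 0 then show ?case by simp
next
  case (Suc j)
  show ?case
  proof (cases "i = Suc j")
    case True then show ?thesis by simp
  next
    case False
    then have "reach T (cfg i) (cfg j)" using Suc by simp
    moreover have "step T (cfg j) (cfg (Suc j))"
      using assms(1) unfolding is_run_def step_def by blast
    ultimately show ?thesis by simp
  qed
qed

lemma fair_inf_step:
  assumes "fair_run T cfg tr" "\<exists>\<^sub>\<infinity>i. cfg i = X" "step T X Y"
  shows "\<exists>\<^sub>\<infinity>i. cfg i = Y"
proof -
  obtain t where t: "step_by T X t Y" using assms(3) unfolding step_def by blast
  then have "\<exists>\<^sub>\<infinity>i. cfg i = X \<and> tr i = t \<and> cfg (Suc i) = Y"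
    using assms(1,2) unfolding fair_run_def by blast
  then have "\<forall>m. \<exists>i>m. cfg (Suc i) = Y" unfolding INFM_nat by blast
  then have "\<forall>m. \<exists>i>m. cfg i = Y" by (metis less_SucI)
  then show ?thesis unfolding INFM_nat by blast
qed

lemma fair_inf_reach:
  assumes "reach T X Y" "fair_run T cfg tr" "\<exists>\<^sub>\<infinity>i. cfg i = X"
  shows "\<exists>\<^sub>\<infinity>i. cfg i = Y"
  using assms(1,3) by induction (auto intro: fair_inf_step[OF assms(2)])

lemma sound:
  assumes rs: "replicated_system n (T::('q::finite) transition set)"
    and sg: "stage_graph T pre posts Stages E"
  shows "satisfies_stp T pre posts"
  unfolding satisfies_stp_def
proof (intro allI impI)
  fix cfg tr assume fr: "fair_run T cfg tr" and c0: "cfg 0 \<in> denot pre"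
  have run: "is_run T cfg tr" using fr unfolding fair_run_def by blast
  define R where "R = {D. reach T (cfg 0) D}"
  have finR: "finite R" unfolding R_def by (rule finite_reach[OF rs])
  have inR: "cfg i \<in> R" for i unfolding R_def using run_reach[OF run, of 0 i] by simp
  define Inf where "Inf = {X. \<exists>\<^sub>\<infinity>i. cfg i = X}"
  have "\<forall>X\<in>R - Inf. \<forall>\<^sub>\<infinity>i. cfg i \<noteq> X" unfolding Inf_def by simp
  then have "\<forall>\<^sub>\<infinity>i. \<forall>X\<in>R - Inf. cfg i \<noteq> X"
    using finR by (simp add: eventually_ball_finite)
  then have "\<forall>\<^sub>\<infinity>i. cfg i \<in> Inf"
    by (rule MOST_mono) (use inR in blast)
  then obtain N where N: "\<forall>m>N. cfg m \<in> Inf" unfolding MOST_nat by blast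
  have InfR: "Inf \<subseteq> R" using inR unfolding Inf_def by (auto dest: INFM_E)
  have Inf_ne: "cfg (Suc N) \<in> Inf" using N by simp
  have Inf_closed: "Y \<in> Inf" if "X \<in> Inf" "reach T X Y" for X Y
    using fair_inf_reach[OF that(2) fr] that(1) unfolding Inf_def by simp
  have Inf_sc: "reach T X Y" if XY: "X \<in> Inf" "Y \<in> Inf" for X Y
  proof -
    obtain i where i: "cfg i = X" using XY(1) unfolding Inf_def INFM_nat by blast
    obtain j where j: "j > i" "cfg j = Y" using XY(2) unfolding Inf_def INFM_nat by blast
    show ?thesis using run_reach[OF run, of i j] i j by simp
  qed
  have ind_incl: "Inf \<subseteq> S" if "inductive_set_cfg T S" "X \<in> Inf" "X \<in> S" for S X
  proof
    fix Y assume "Y \<in> Inf"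
    then have "reach T X Y" using Inf_sc that(2) by blast
    then show "Y \<in> S" using that(3)
      by induction (use that(1) in \<open>auto simp: inductive_set_cfg_def\<close>)
  qed
  have fin: "finite Stages" and Esub: "E \<subseteq> Stages \<times> Stages" and acyc: "acyclic E"
    and ind: "\<forall>S\<in>Stages. inductive_set_cfg T S"
    and cov: "\<forall>C\<in>denot pre. \<exists>S\<in>Stages. C \<in> S"
    and cert: "\<forall>S\<in>Stages. E `` {S} \<noteq> {} \<longrightarrow> (\<exists>f. certificate T f S (\<Union>(E `` {S})))"
    and termn: "\<forall>S\<in>Stages. E `` {S} = {} \<longrightarrow> (\<exists>phi\<in>set posts. S \<subseteq> denot phi)"
    using sg unfolding stage_graph_def by blast+
  have finE: "finite E" using finite_subset[OF Esub] fin by blast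
  have wfE: "wf (E\<inverse>)" by (rule finite_acyclic_wf_converse[OF finE acyc])
  have key: "\<forall>S. S \<in> Stages \<longrightarrow> Inf \<subseteq> S \<longrightarrow> (\<exists>S'\<in>Stages. E `` {S'} = {} \<and> Inf \<subseteq> S')" 
  proof (rule allI, rule wf_induct[OF wfE, of "\<lambda>S. S \<in> Stages \<longrightarrow> Inf \<subseteq> S \<longrightarrow> (\<exists>S'\<in>Stages. E `` {S'} = {} \<and> Inf \<subseteq> S')"])
    fix S assume IH: "\<forall>y. (y, S) \<in> E\<inverse> \<longrightarrow> y \<in> Stages \<longrightarrow> Inf \<subseteq> y \<longrightarrow> (\<exists>S'\<in>Stages. E `` {S'} = {} \<and> Inf \<subseteq> S')"
    show "S \<in> Stages \<longrightarrow> Inf \<subseteq> S \<longrightarrow> (\<exists>S'\<in>Stages. E `` {S'} = {} \<and> Inf \<subseteq> S')"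
    proof (intro impI)
      assume S: "S \<in> Stages" "Inf \<subseteq> S"
      show "\<exists>S'\<in>Stages. E `` {S'} = {} \<and> Inf \<subseteq> S'"
      proof (cases "E `` {S} = {}")
        case True then show ?thesis using S by blast
      next
        case False
        then obtain f where f: "certificate T f S (\<Union>(E `` {S}))" using cert S by blast
        show ?thesis
        proof (cases "\<exists>X\<in>Inf. X \<in> \<Union>(E `` {S})")
          case True
          then obtain X S' where X: "X \<in> Inf" "(S, S') \<in> E" "X \<in> S'" by blast
          then have S': "S' \<in> Stages" using Esub by blast
          then have "Inf \<subseteq> S'" using ind_incl[OF _ X(1) X(3)] ind by blast
          then show ?thesis using IH X(2) S' by blast
        next
          case False
          have "\<exists>k. \<exists>X\<in>Inf. f X = k" using Inf_ne by blast
          then obtain k where k: "\<exists>X\<in>Inf. f X = k" "\<forall>m<k. \<not> (\<exists>X\<in>Inf. f X = m)"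
            using exists_least_iff[of "\<lambda>k. \<exists>X\<in>Inf. f X = k"] by blast
          then obtain X where X: "X \<in> Inf" "f X = k" by blast
          then have "X \<in> S - \<Union>(E `` {S})" using S False by blast
          then obtain D where D: "reach T X D" "f D < f X" using f unfolding certificate_def by blast
          have "D \<in> Inf" using Inf_closed[OF X(1) D(1)] .
          then show ?thesis using k(2) D(2) X(2) by blast
        qed
      qed
    qed
  qed
  obtain S0 where S0: "S0 \<in> Stages" "cfg 0 \<in> S0" using cov c0 by blast
  have "Inf \<subseteq> S0" using ind_incl[OF _ Inf_ne] ind S0 Inf_sc
  proof -
    have "reach T (cfg 0) (cfg (Suc N))" using run_reach[OF run] by simp
    then have "cfg (Suc N) \<in> S0" using S0(2)
      by induction (use ind S0(1) in \<open>auto simp: inductive_set_cfg_def\<close>)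
    then show ?thesis using ind_incl[OF _ Inf_ne] ind S0(1) by blast
  qed
  then obtain S' where S': "S' \<in> Stages" "E `` {S'} = {}" "Inf \<subseteq> S'" using key S0 by blast
  then obtain phi where phi: "phi \<in> set posts" "S' \<subseteq> denot phi" using termn by blast
  have "\<forall>m\<ge>Suc N. cfg m \<in> denot phi" using N S'(3) phi(2) by (meson Suc_le_lessD subsetD)
  then show "\<exists>phi\<in>set posts. \<exists>N. \<forall>m\<ge>N. cfg m \<in> denot phi" using phi(1) by blast
qed

section \<open>Completeness\<close>

fun chain :: "('q::finite) transition set \<Rightarrow> 'q multiset \<Rightarrow> ('q multiset \<times> 'q transition \<times> 'q multiset) list \<Rightarrow> 'q multiset \<Rightarrow> bool" where
  "chain T C [] D = (C = D)"
| "chain T C (s # ps) D = (fst s = C \<and> step_by T (fst s) (fst (snd s)) (snd (snd s)) \<and> chain T (snd (snd s)) ps D)"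

lemma chain_append: "chain T C (ps @ qs) E = (\<exists>D. chain T C ps D \<and> chain T D qs E)"
  by (induction ps arbitrary: C) auto

lemma reach_chain:
  assumes "reach T C D" shows "\<exists>ps. chain T C ps D"
  using assms
proof (induction rule: converse_rtranclp_induct)
  case base
  then show ?case by (metis chain.simps(1))
next
  case (step y z)
  then obtain ps t where "chain T z ps D" "step_by T y t z" unfolding step_def by blast
  then have "chain T y ((y, t, z) # ps) D" by simp
  then show ?case by blast
qed

lemma chain_nth:
  assumes "chain T C ps D" "i < length ps"
  shows "step_by T (fst (ps!i)) (fst (snd (ps!i))) (snd (snd (ps!i)))
    \<and> (Suc i < length ps \<longrightarrow> fst (ps ! Suc i) = snd (snd (ps!i)))
    \<and> (Suc i = length ps \<longrightarrow> snd (snd (ps!i)) = D)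
    \<and> reach T C (fst (ps!i))"
  using assms
proof (induction ps arbitrary: C i)
  case Nil then show ?case by simp
next
  case (Cons s ps)
  show ?case
  proof (cases i)
    case 0
    then show ?thesis using Cons.prems by (cases ps) auto
  next
    case (Suc j)
    then have IH: "step_by T (fst (ps!j)) (fst (snd (ps!j))) (snd (snd (ps!j)))
    \<and> (Suc j < length ps \<longrightarrow> fst (ps ! Suc j) = snd (snd (ps!j)))
    \<and> (Suc j = length ps \<longrightarrow> snd (snd (ps!j)) = D)
    \<and> reach T (snd (snd s)) (fst (ps!j))" using Cons by auto
    have "step_by T C (fst (snd s)) (snd (snd s))" using Cons.prems by auto
    then have "step T C (snd (snd s))" unfolding step_def by blast
    then have "reach T C (fst (ps!j))" using IH by (meson converse_rtranclp_into_rtranclp)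
    then show ?thesis unfolding Suc nth_Cons_Suc length_Cons Suc_less_eq Suc_inject
      using IH by blast
  qed
qed

lemma chain_hd: "chain T C ps D \<Longrightarrow> ps \<noteq> [] \<Longrightarrow> fst (ps!0) = C"
  by (cases ps) auto

lemma chain_nil: "chain T C [] D \<Longrightarrow> C = D" by simp

lemma cover_cycle:
  assumes bot: "\<forall>D. reach T b D \<longrightarrow> reach T D b" and "finite F"
    and "\<forall>(X, t, Y)\<in>F. reach T b X \<and> step_by T X t Y"
  shows "\<exists>c. chain T b c b \<and> F \<subseteq> set c"
  using assms(2,3)
proof (induction F rule: finite_induct)
  case empty
  have "chain T b [] b" by simp
  then show ?case by blast
next
  case (insert s F)
  obtain X t Y where s: "s = (X, t, Y)" by (cases s) auto
  obtain c where c: "chain T b c b" "F \<subseteq> set c" using insert by auto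
  have X: "reach T b X" and st: "step_by T X t Y" using insert.prems s by auto
  obtain p1 where p1: "chain T b p1 X" using reach_chain[OF X] by blast
  have "step T X Y" using st unfolding step_def by blast
  then have "reach T b Y" using rtranclp.rtrancl_into_rtrancl[OF X] by blast
  then obtain p2 where p2: "chain T Y p2 b" using reach_chain bot by blast
  have "chain T b (p1 @ [(X, t, Y)] @ p2 @ c) b"
    using p1 p2 c st by (auto simp: chain_append)
  moreover have "insert s F \<subseteq> set (p1 @ [(X, t, Y)] @ p2 @ c)" using c s by auto
  ultimately show ?case by blast
qed

lemma fair_run_exists:
  assumes rs: "replicated_system n (T::('q::finite) transition set)"
    and p: "chain T C0 p b" and bot: "\<forall>D. reach T b D \<longrightarrow> reach T D b"
  shows "\<exists>cfg tr. fair_run T cfg tr \<and> cfg 0 = C0 \<and> (\<forall>X. reach T b X \<longrightarrow> (\<exists>\<^sub>\<infinity>i. cfg i = X))"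
proof -
  define F where "F = {(X, t, Y). reach T b X \<and> step_by T X t Y}"
  have "F \<subseteq> {X. reach T b X} \<times> T \<times> {Y. reach T b Y}"
  proof
    fix s assume "s \<in> F"
    then obtain X t Y where s: "s = (X, t, Y)" "reach T b X" "step_by T X t Y"
      unfolding F_def by auto
    then have "step T X Y" unfolding step_def by blast
    then have "reach T b Y" using rtranclp.rtrancl_into_rtrancl[OF s(2)] by blast
    moreover have "t \<in> T" using s(3) unfolding step_by_def by blast
    ultimately show "s \<in> {X. reach T b X} \<times> T \<times> {Y. reach T b Y}" using s by simp
  qed
  moreover have "finite ({X. reach T b X} \<times> T \<times> {Y. reach T b Y})"
    using finite_reach[OF rs] finite_T[OF rs] by blast
  ultimately have finF: "finite F" by (rule finite_subset)
  obtain c where c: "chain T b c b" "F \<subseteq> set c"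
    using cover_cycle[OF bot finF] unfolding F_def by auto
  have silentF: "(X, ({#},{#}), X) \<in> F" if "reach T b X" for X
    using that silent_step[OF rs] unfolding F_def by auto
  then have "c \<noteq> []" using c(2) by fastforce
  then have lc: "length c > 0" by simp
  define w where "w i = (if i < length p then p!i else c!((i - length p) mod length c))" for i
  define cfg where "cfg i = fst (w i)" for i
  define tr where "tr i = fst (snd (w i))" for i
  have wstep: "step_by T (fst (w i)) (fst (snd (w i))) (snd (snd (w i))) \<and> fst (w (Suc i)) = snd (snd (w i))
     \<and> (i \<ge> length p \<longrightarrow> reach T b (fst (w i)))" for i
  proof (cases "i < length p")
    case True
    note h = chain_nth[OF p True]
    show ?thesis
    proof (cases "Suc i < length p")
      case True then show ?thesis using h \<open>i < length p\<close> by (simp add: w_def)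
    next
      case False
      then have "Suc i = length p" using \<open>i < length p\<close> by simp
      then show ?thesis using h \<open>i < length p\<close> chain_hd[OF c(1) \<open>c \<noteq> []\<close>] by (auto simp: w_def)
    qed
  next
    case False
    define k where "k = (i - length p) mod length c"
    have k: "k < length c" unfolding k_def using lc by simp
    have wi: "w i = c ! k" using False by (simp add: w_def k_def)
    note h = chain_nth[OF c(1) k]
    have ws: "w (Suc i) = c ! (Suc k mod length c)"
      using False by (simp add: w_def k_def Suc_diff_le mod_Suc_eq)
    show ?thesis
    proof (cases "Suc k < length c")
      case True then show ?thesis using h wi ws by simp
    next
      case False
      then have "Suc k = length c" using k by simp
      then show ?thesis using h wi ws chain_hd[OF c(1) \<open>c \<noteq> []\<close>] by auto
    qed
  qed
  have run: "is_run T cfg tr" unfolding is_run_def cfg_def tr_def using wstep by simp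
  have wper: "w (length p + m * length c + j) = c ! j" if "j < length c" for m j
    using that by (simp add: w_def)
  have inf_c: "\<exists>\<^sub>\<infinity>i. w i = c ! j" if "j < length c" for j
    unfolding INFM_nat
  proof
    fix m
    have "Suc m * length c \<ge> Suc m" using lc by (metis One_nat_def Suc_leI mult_le_mono2 mult.right_neutral)
    then have "length p + Suc m * length c + j > m" by linarith
    then show "\<exists>i>m. w i = c ! j" using wper[OF that] by blast
  qed
  have inf_F: "\<exists>\<^sub>\<infinity>i. w i = s" if "s \<in> F" for s
  proof -
    have "s \<in> set c" using c(2) that by blast
    then obtain j where "j < length c" "c ! j = s" by (auto simp: in_set_conv_nth)
    then show ?thesis using inf_c by blast
  qed
  have fair: "fair_run T cfg tr" unfolding fair_run_def
  proof (intro conjI run allI impI)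
    fix X t Y assume st: "step_by T X t Y" and inf: "\<exists>\<^sub>\<infinity>i. cfg i = X"
    then obtain i where i: "i > length p" "cfg i = X" unfolding INFM_nat by blast
    then have "reach T b X" using wstep[of i] unfolding cfg_def by simp
    then have "(X, t, Y) \<in> F" using st unfolding F_def by simp
    then have "\<exists>\<^sub>\<infinity>i. w i = (X, t, Y)" by (rule inf_F)
    then show "\<exists>\<^sub>\<infinity>i. cfg i = X \<and> tr i = t \<and> cfg (Suc i) = Y"
      by (rule INFM_mono) (use wstep in \<open>auto simp: cfg_def tr_def\<close>)
  qed
  have c0: "cfg 0 = C0"
  proof (cases "p = []")
    case True
    then have "C0 = b" using p by simp
    then show ?thesis using True chain_hd[OF c(1) \<open>c \<noteq> []\<close>] by (simp add: cfg_def w_def)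
  next
    case False
    then show ?thesis using chain_hd[OF p False] by (simp add: cfg_def w_def)
  qed
  have "\<exists>\<^sub>\<infinity>i. cfg i = X" if "reach T b X" for X
    using inf_F[OF silentF[OF that]] by (rule INFM_mono) (simp add: cfg_def)
  then show ?thesis using fair c0 by blast
qed

lemma bottom_exists:
  assumes rs: "replicated_system n (T::('q::finite) transition set)"
  shows "\<exists>b. reach T C b \<and> (\<forall>D. reach T b D \<longrightarrow> reach T D b)"
proof -
  define R where "R X = {D. reach T X D}" for X
  have "\<exists>k. \<exists>b. reach T C b \<and> card (R b) = k" by blast
  then obtain k where k: "\<exists>b. reach T C b \<and> card (R b) = k"
      "\<forall>m<k. \<not> (\<exists>b. reach T C b \<and> card (R b) = m)"
    using exists_least_iff[of "\<lambda>k. \<exists>b. reach T C b \<and> card (R b) = k"] by blast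
  then obtain b where b: "reach T C b" "card (R b) = k" by blast
  have "reach T D b" if D: "reach T b D" for D
  proof -
    have sub: "R D \<subseteq> R b" unfolding R_def using D by auto
    have "reach T C D" using b(1) D by simp
    then have "\<not> card (R D) < k" using k(2) by blast
    then have ge: "card (R D) \<ge> k" by simp
    have fin: "finite (R b)" unfolding R_def by (rule finite_reach[OF rs])
    have "card (R D) \<le> card (R b)" by (rule card_mono[OF fin sub])
    then have "card (R D) = card (R b)" using ge b(2) by simp
    then have "R D = R b" by (rule card_subset_eq[OF fin sub])
    moreover have "b \<in> R b" unfolding R_def by simp
    ultimately have "b \<in> R D" by simp
    then show ?thesis unfolding R_def by simp
  qed
  then show ?thesis using b by blast
qed

lemma reach_good:
  assumes rs: "replicated_system n (T::('q::finite) transition set)"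
    and sat: "satisfies_stp T pre posts"
    and C0: "C0 \<in> denot pre" and D: "reach T C0 D"
  shows "\<exists>phi\<in>set posts. \<exists>E. reach T D E \<and> (\<forall>F. reach T E F \<longrightarrow> F \<in> denot phi)"
proof -
  obtain b where b: "reach T D b" "\<forall>X. reach T b X \<longrightarrow> reach T X b"
    using bottom_exists[OF rs] by blast
  have "reach T C0 b" using D b(1) by simp
  then obtain p where p: "chain T C0 p b" using reach_chain by blast
  obtain cfg tr where r: "fair_run T cfg tr" "cfg 0 = C0" "\<forall>X. reach T b X \<longrightarrow> (\<exists>\<^sub>\<infinity>i. cfg i = X)"
    using fair_run_exists[OF rs p b(2)] by blast
  have "fair_run T cfg tr \<longrightarrow> cfg 0 \<in> denot pre \<longrightarrow>
        (\<exists>phi \<in> set posts. \<exists>N. \<forall>m\<ge>N. cfg m \<in> denot phi)"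
    using sat unfolding satisfies_stp_def by (elim allE)
  then obtain phi N where phi: "phi \<in> set posts" "\<forall>m\<ge>N. cfg m \<in> denot phi"
    using r(1,2) C0 by auto
  have "F \<in> denot phi" if "reach T b F" for F
  proof -
    have "\<exists>\<^sub>\<infinity>i. cfg i = F" using r(3) that by blast
    then obtain i where "i > N" "cfg i = F" unfolding INFM_nat by blast
    then show ?thesis using phi(2) by auto
  qed
  then show ?thesis using phi(1) b(1) by blast
qed

lemma complete:
  assumes rs: "replicated_system n (T::('q::finite) transition set)"
    and sat: "satisfies_stp T pre posts"
  shows "has_stage_graph T pre posts"
proof -
  define S0 where "S0 = {D. \<exists>C\<in>denot pre. reach T C D}"
  define Sp where "Sp phi = {D. \<forall>F. reach T D F \<longrightarrow> F \<in> denot phi}" for phi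
  have indS0: "inductive_set_cfg T S0" unfolding inductive_set_cfg_def S0_def
    by (auto intro: rtranclp.rtrancl_into_rtrancl)
  have indSp: "inductive_set_cfg T (Sp phi)" for phi unfolding inductive_set_cfg_def Sp_def
    by (auto intro: converse_rtranclp_into_rtranclp)
  have Sp_sub: "Sp phi \<subseteq> denot phi" for phi unfolding Sp_def by auto
  have preS0: "denot pre \<subseteq> S0" unfolding S0_def by auto
  show ?thesis
  proof (cases "denot pre = {}")
    case True
    have "stage_graph T pre posts {} {}" unfolding stage_graph_def acyclic_def using True by auto
    then show ?thesis unfolding has_stage_graph_def by blast
  next
    case pre_ne: False
    show ?thesis
    proof (cases "\<exists>phi\<in>set posts. S0 \<subseteq> denot phi")
      case True
      have "stage_graph T pre posts {S0} {}" unfolding stage_graph_def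
        using True indS0 preS0 by (auto simp: acyclic_def)
      then show ?thesis unfolding has_stage_graph_def by blast
    next
      case False
      then have neq: "Sp phi \<noteq> S0" if "phi \<in> set posts" for phi using Sp_sub that by blast
      obtain C0 where C0: "C0 \<in> denot pre" using pre_ne by blast
      then have "set posts \<noteq> {}" using reach_good[OF rs sat C0, of C0] by auto
      define Stages where "Stages = insert S0 (Sp ` set posts)"
      define E where "E = (\<lambda>phi. (S0, Sp phi)) ` set posts"
      have Eimg: "E `` {S} = (if S = S0 then Sp ` set posts else {})" for S
        unfolding E_def by auto
      have Etr: "x = S0 \<and> y \<noteq> S0" if "(x, y) \<in> E\<^sup>+" for x y
        using that
      proof (induction rule: trancl_induct)
        case (base y) then show ?case unfolding E_def using neq by auto
      next
        case (step y z) then show ?case unfolding E_def by auto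
      qed
      have acyc: "acyclic E" unfolding acyclic_def using Etr by blast
      define f where "f D = (LEAST k. \<exists>F. (step T ^^ k) D F \<and> F \<in> \<Union>(Sp ` set posts))" for D
      have cert: "certificate T f S0 (\<Union>(Sp ` set posts))" unfolding certificate_def
      proof
        fix D assume D: "D \<in> S0 - \<Union>(Sp ` set posts)"
        then obtain C where C: "C \<in> denot pre" "reach T C D" unfolding S0_def by blast
        obtain phi F where F: "phi \<in> set posts" "reach T D F" "\<forall>G. reach T F G \<longrightarrow> G \<in> denot phi"
          using reach_good[OF rs sat C] by blast
        then have "F \<in> Sp phi" unfolding Sp_def by simp
        then have FU: "F \<in> \<Union>(Sp ` set posts)" using F(1) by blast
        obtain k where "(step T ^^ k) D F" using F(2) rtranclp_power by metis
        then have ex: "\<exists>k F. (step T ^^ k) D F \<and> F \<in> \<Union>(Sp ` set posts)" using FU by blast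
        have "\<exists>F. (step T ^^ (f D)) D F \<and> F \<in> \<Union>(Sp ` set posts)"
          unfolding f_def by (rule LeastI_ex[OF ex])
        then obtain F' where F': "(step T ^^ (f D)) D F'" "F' \<in> \<Union>(Sp ` set posts)" by blast
        have "f D \<noteq> 0"
        proof
          assume h: "f D = 0"
          have "(step T ^^ 0) D F'" using F'(1) unfolding h .
          then have "D = F'" by (rule relpowp_0_E)
          then show False using F'(2) D by blast
        qed
        then obtain k' where k': "f D = Suc k'" by (cases "f D") auto
        have "(step T ^^ Suc k') D F'" using F'(1) unfolding k' .
        then obtain D' where D': "step T D D'" "(step T ^^ k') D' F'"
          by (blast dest: relpowp_Suc_D2)
        have "f D' \<le> k'" unfolding f_def by (rule Least_le) (use D'(2) F'(2) in blast)
        then have lt: "f D' < f D" using k' by simp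
        have "D' \<in> S0" using D D'(1) indS0 unfolding inductive_set_cfg_def by blast
        moreover have "reach T D D'" using D'(1) by simp
        ultimately show "\<exists>D'. reach T D D' \<and> D' \<in> S0 \<and> f D > f D'" using lt by blast
      qed
      have "stage_graph T pre posts Stages E" unfolding stage_graph_def
      proof (intro conjI)
        show "finite Stages" unfolding Stages_def by simp
        show "E \<subseteq> Stages \<times> Stages" unfolding E_def Stages_def by auto
        show "acyclic E" by (rule acyc)
        show "\<forall>S\<in>Stages. inductive_set_cfg T S" unfolding Stages_def using indS0 indSp by auto
        show "\<forall>C\<in>denot pre. \<exists>S\<in>Stages. C \<in> S" unfolding Stages_def using preS0 by auto
        show "\<forall>S\<in>Stages. E `` {S} \<noteq> {} \<longrightarrow> (\<exists>f. certificate T f S (\<Union>(E `` {S})))"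
          using cert by (auto simp: Eimg)
        show "\<forall>S\<in>Stages. E `` {S} = {} \<longrightarrow> (\<exists>phi\<in>set posts. S \<subseteq> denot phi)"
          unfolding Stages_def using Sp_sub \<open>set posts \<noteq> {}\<close> neq by (auto simp: Eimg)
      qed
      then show ?thesis unfolding has_stage_graph_def by blast
    qed
  qed
qed

theorem proposition3:
  fixes T :: "('q::finite) transition set" and n :: nat
    and pre :: "'q pform" and posts :: "'q pform list"
  assumes "replicated_system n T"
  shows "satisfies_stp T pre posts \<longleftrightarrow> has_stage_graph T pre posts"
  using sound[OF assms] complete[OF assms] unfolding has_stage_graph_def by blast

end
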